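(* Let $N=\{1,\dots,n\}$ be agents and $A$ a finite item set with additive valuations with externalities $V_i(j,a)\in\mathbb{R}$. Every complete allocation satisfying PROP-Ave satisfies GFS.
   Context: A complete allocation $\pi$ partitions $A$ into bundles $\pi_1,\dots,\pi_n$; $\pi(a)$ is the agent receiving $a$; $V_i(j,a)$ is agent $i$'s value when item $a$ goes to agent $j$; $V_i(\pi)=\sum_{a\in A}V_i(\pi(a),a)$. $\pi$ satisfies PROP-Ave if $V_i(\pi)\ge\frac1n\sum_{a\in A}\sum_{j\in N}V_i(j,a)$ for all $i$. Let $V_i^{max}(a)=\max_{j\in N}V_i(j,a)$, $V_i^{min}(a)=\min_{j\in N}V_i(j,a)$, $\mathrm{GFS}_i=\frac1n\sum_{a\in A}(V_i^{max}(a)-V_i^{min}(a))$; $\pi$ satisfies GFS if $V_i(\pi)\ge\mathrm{GFS}_i+\sum_{a\in A}V_i^{min}(a)$ for all $i\in N$. *)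

theory Defs
  imports Complex_Main
begin

text \<open>V i j a is agent i's value
when item a is given to agent j. A complete allocation is a map \<sigma> assigning each
item of A to an agent in N (bundles are the fibres of \<sigma>).\<close>

definition complete_allocation :: "nat \<Rightarrow> 'a set \<Rightarrow> ('a \<Rightarrow> nat) \<Rightarrow> bool" where
  "complete_allocation n A \<sigma> \<longleftrightarrow> (\<forall>a\<in>A. \<sigma> a \<in> {1..n})"

definition alloc_value :: "(nat \<Rightarrow> nat \<Rightarrow> 'a \<Rightarrow> real) \<Rightarrow> 'a set \<Rightarrow> nat \<Rightarrow> ('a \<Rightarrow> nat) \<Rightarrow> real" where
  "alloc_value V A i \<sigma> = (\<Sum>a\<in>A. V i (\<sigma> a) a)"

definition PROP_Ave :: "nat \<Rightarrow> 'a set \<Rightarrow> (nat \<Rightarrow> nat \<Rightarrow> 'a \<Rightarrow> real) \<Rightarrow> ('a \<Rightarrow> nat) \<Rightarrow> bool" where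
  "PROP_Ave n A V \<sigma> \<longleftrightarrow>
     (\<forall>i\<in>{1..n}. alloc_value V A i \<sigma> \<ge> (1 / real n) * (\<Sum>a\<in>A. \<Sum>j\<in>{1..n}. V i j a))"

definition Vmax :: "nat \<Rightarrow> (nat \<Rightarrow> nat \<Rightarrow> 'a \<Rightarrow> real) \<Rightarrow> nat \<Rightarrow> 'a \<Rightarrow> real" where
  "Vmax n V i a = Max ((\<lambda>j. V i j a) ` {1..n})"

definition Vmin :: "nat \<Rightarrow> (nat \<Rightarrow> nat \<Rightarrow> 'a \<Rightarrow> real) \<Rightarrow> nat \<Rightarrow> 'a \<Rightarrow> real" where
  "Vmin n V i a = Min ((\<lambda>j. V i j a) ` {1..n})"

definition GFS_share :: "nat \<Rightarrow> 'a set \<Rightarrow> (nat \<Rightarrow> nat \<Rightarrow> 'a \<Rightarrow> real) \<Rightarrow> nat \<Rightarrow> real" where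
  "GFS_share n A V i = (1 / real n) * (\<Sum>a\<in>A. Vmax n V i a - Vmin n V i a)"

definition GFS :: "nat \<Rightarrow> 'a set \<Rightarrow> (nat \<Rightarrow> nat \<Rightarrow> 'a \<Rightarrow> real) \<Rightarrow> ('a \<Rightarrow> nat) \<Rightarrow> bool" where
  "GFS n A V \<sigma> \<longleftrightarrow>
     (\<forall>i\<in>{1..n}. alloc_value V A i \<sigma> \<ge> GFS_share n A V i + (\<Sum>a\<in>A. Vmin n V i a))"

end

theory Submission
  imports Defs
begin

lemma item_bound:
  fixes f :: "nat \<Rightarrow> real"
  assumes "n \<ge> 1"
  shows "(\<Sum>j\<in>{1..n}. f j) \<ge> Max (f ` {1..n}) + (real n - 1) * Min (f ` {1..n})"
proof -
  have ne: "f ` {1..n} \<noteq> {}" using assms by auto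
  have "Max (f ` {1..n}) \<in> f ` {1..n}" using ne by (intro Max_in) auto
  then obtain k where k: "k \<in> {1..n}" "f k = Max (f ` {1..n})" by auto
  have "(\<Sum>j\<in>{1..n}. f j) = f k + (\<Sum>j\<in>{1..n}-{k}. f j)"
    using k by (simp add: sum.remove)
  moreover have "(\<Sum>j\<in>{1..n}-{k}. f j) \<ge> (\<Sum>j\<in>{1..n}-{k}. Min (f ` {1..n}))"
    by (intro sum_mono) auto
  moreover have "card ({1..n}-{k}) = n - 1" using k by simp
  ultimately show ?thesis using k assms by (simp add: of_nat_diff)
qed

theorem proposition4:
  fixes n :: nat and A :: "'a set" and V :: "nat \<Rightarrow> nat \<Rightarrow> 'a \<Rightarrow> real"
    and \<sigma> :: "'a \<Rightarrow> nat"
  assumes "n \<ge> 1" and "finite A"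
    and "complete_allocation n A \<sigma>"
    and "PROP_Ave n A V \<sigma>"
  shows "GFS n A V \<sigma>"
  unfolding GFS_def
proof
  fix i assume i: "i \<in> {1..n}"
  have np: "real n > 0" using assms by simp
  have P: "alloc_value V A i \<sigma> \<ge> (1 / real n) * (\<Sum>a\<in>A. \<Sum>j\<in>{1..n}. V i j a)"
    using assms(4) i unfolding PROP_Ave_def by blast
  have "(\<Sum>a\<in>A. \<Sum>j\<in>{1..n}. V i j a) \<ge> (\<Sum>a\<in>A. Vmax n V i a + (real n - 1) * Vmin n V i a)"
    unfolding Vmax_def Vmin_def by (intro sum_mono item_bound assms(1))
  also have "(\<Sum>a\<in>A. Vmax n V i a + (real n - 1) * Vmin n V i a)
      = (\<Sum>a\<in>A. Vmax n V i a - Vmin n V i a) + real n * (\<Sum>a\<in>A. Vmin n V i a)"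
    by (simp add: sum.distrib sum_distrib_left sum_subtractf algebra_simps)
  finally have "(1 / real n) * (\<Sum>a\<in>A. \<Sum>j\<in>{1..n}. V i j a) \<ge>
     (1 / real n) * ((\<Sum>a\<in>A. Vmax n V i a - Vmin n V i a) + real n * (\<Sum>a\<in>A. Vmin n V i a))"
    using np by (intro mult_left_mono) auto
  also have "(1 / real n) * ((\<Sum>a\<in>A. Vmax n V i a - Vmin n V i a) + real n * (\<Sum>a\<in>A. Vmin n V i a))
     = GFS_share n A V i + (\<Sum>a\<in>A. Vmin n V i a)"
    unfolding GFS_share_def using np by (simp add: field_simps)
  finally show "alloc_value V A i \<sigma> \<ge> GFS_share n A V i + (\<Sum>a\<in>A. Vmin n V i a)"
    using P by linarith
qed

end
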